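(* Let $C_{\mathrm{SSD}}=\mathrm{SSD}(D(X),D(Y))$ be the output of the SSD algorithm applied to the full dictionary snapshots. Consider the P-SSD algorithm described in the context, executed over an arbitrary, possibly time-varying, sequence of digraphs. Then at each iteration $k\in\mathbb{N}_0$, $\mathcal{R}(C_{\mathrm{SSD}})\subseteq\mathcal{R}(C_k^i)$ for all $i\in\{1,\dots,M\}$.
   Context: Data setting: a map $T:\mathcal{M}\to\mathcal{M}$, $\mathcal{M}\subseteq\mathbb{R}^n$; a dictionary $D(x)=[d_1(x),\dots,d_{N_d}(x)]$ of real-valued functions on $\mathcal{M}$; data matrices $X,Y\in\mathbb{R}^{N\times n}$ whose $i$-th rows $x_i^T,y_i^T$ satisfy $y_i=T(x_i)$; $D(X)\in\mathbb{R}^{N\times N_d}$ is the matrix with rows $D(x_1),\dots,D(x_N)$ (similarly $D(Y)$). Assumption: $D(X)$ and $D(Y)$ have full column rank. There are $M$ agents; agent $i$ holds local dictionary snapshots $D(X_i),D(Y_i)$ (obtained from a subset of the snapshot pairs) such that the union over $i$ of the rows of $[D(X_i),D(Y_i)]$ equals the set of rows of $[D(X),D(Y)]$. There are signature matrices $D(X_s),D(Y_s)$ with full column rank such that the rows of $[D(X_s),D(Y_s)]$ are contained in the rows of $[D(X_i),D(Y_i)]$ for every $i$. SSD algorithm: given $A,B\in\mathbb{R}^{m\times q}$, set $A_1=A$, $B_1=B$, $C=I_q$, and iterate: let $[Z^A_j;Z^B_j]$ be a matrix whose columns form a basis of the null space of $[A_j,B_j]$ (with $Z^A_j$ having as many rows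 as $A_j$ has columns); if the null space is trivial return $0$; if the number of rows of $Z^A_j$ is at most its number of columns, return $C$; otherwise set $C\leftarrow CZ^A_j$, $A_{j+1}=A_jZ^A_j$, $B_{j+1}=B_jZ^A_j$. Its output is denoted $\mathrm{SSD}(A,B)$. P-SSD algorithm: at iteration $k\ge1$ the digraph $G_k$ is used; an edge $(j,i)\in E_k$ means $j$ is an in-neighbor of $i$, and $\mathcal{N}_{\mathrm{in}}^k(i)$ denotes the in-neighbors of $i$ in $G_k$. Each agent $i$ sets $C_0^i=I_{N_d}$, $\mathrm{flag}_0^i=0$, and for $k=1,2,\dots$: receives $C_{k-1}^j$ for $j\in\mathcal{N}_{\mathrm{in}}^k(i)$; sets $D_k^i=\mathrm{basis}\big(\bigcap_{j\in\{i\}\cup\mathcal{N}_{\mathrm{in}}^k(i)}\mathcal{R}(C_{k-1}^j)\big)$; sets $E_k^i=\mathrm{SSD}(D(X_i)D_k^i,D(Y_i)D_k^i)$; if the number of columns of $D_k^iE_k^i$ is strictly less than that of $C_{k-1}^i$, sets $C_k^i=D_k^iE_k^i$ and $\mathrm{flag}_k^i=0$; otherwise sets $C_k^i=C_{k-1}^i$ and $\mathrm{flag}_k^i=1$; then transmits $C_k^i$ to its out-neighbors. Here $\mathrm{basis}(\mathcal{A})$ returns a matrix whose columns form a basis of the subspace $\mathcal{A}$, and returns $0$ if $\mathcal{A}=\{0\}$; the matrix $0$ is regarded as having $0$ columns. $\mathcal{R}(\cdot)$ denotes range space. *)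

theory Defs
  imports "Jordan_Normal_Form.Matrix"
begin

definition mat_range :: "real mat \<Rightarrow> real vec set" where
  "mat_range Z = {Z *\<^sub>v x | x. x \<in> carrier_vec (dim_col Z)}"

definition full_column_rank :: "real mat \<Rightarrow> bool" where
  "full_column_rank Z \<longleftrightarrow>
     (\<forall>x \<in> carrier_vec (dim_col Z). Z *\<^sub>v x = 0\<^sub>v (dim_row Z) \<longrightarrow> x = 0\<^sub>v (dim_col Z))"

text \<open>The columns of Z form a basis of the subspace S.  For S = {0} this forces Z to
  have 0 columns (the convention that basis({0}) = 0 is a matrix with 0 columns).\<close>
definition col_basis :: "real mat \<Rightarrow> real vec set \<Rightarrow> bool" where
  "col_basis Z S \<longleftrightarrow> full_column_rank Z \<and> mat_range Z = S"

definition hcat :: "real mat \<Rightarrow> real mat \<Rightarrow> real mat" where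
  "hcat A B = mat (dim_row A) (dim_col A + dim_col B)
     (\<lambda>(r, c). if c < dim_col A then A $$ (r, c) else B $$ (r, c - dim_col A))"

definition null_space_pair :: "real mat \<Rightarrow> real mat \<Rightarrow> real vec set" where
  "null_space_pair A B =
     {v \<in> carrier_vec (dim_col A + dim_col B). hcat A B *\<^sub>v v = 0\<^sub>v (dim_row A)}"

definition upper_block :: "real mat \<Rightarrow> real mat \<Rightarrow> real mat" where
  "upper_block A Z = mat (dim_col A) (dim_col Z) (\<lambda>(r, c). Z $$ (r, c))"

text \<open>ssd_from A B C out: starting the SSD loop with current A_j = A, B_j = B and
  accumulated C, the algorithm can return out (for some choice of null-space bases).\<close>
inductive ssd_from :: "real mat \<Rightarrow> real mat \<Rightarrow> real mat \<Rightarrow> real mat \<Rightarrow> bool" where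
  ssd_trivial:
    "col_basis Z (null_space_pair A B) \<Longrightarrow> dim_col Z = 0 \<Longrightarrow>
     ssd_from A B C (0\<^sub>m (dim_row C) 0)"
| ssd_stop:
    "col_basis Z (null_space_pair A B) \<Longrightarrow> 0 < dim_col Z \<Longrightarrow> dim_col A \<le> dim_col Z \<Longrightarrow>
     ssd_from A B C C"
| ssd_step:
    "col_basis Z (null_space_pair A B) \<Longrightarrow> 0 < dim_col Z \<Longrightarrow> dim_col Z < dim_col A \<Longrightarrow>
     ssd_from (A * upper_block A Z) (B * upper_block A Z) (C * upper_block A Z) out \<Longrightarrow>
     ssd_from A B C out"

definition is_SSD :: "real mat \<Rightarrow> real mat \<Rightarrow> real mat \<Rightarrow> bool" where
  "is_SSD A B out \<longleftrightarrow> ssd_from A B (1\<^sub>m (dim_col A)) out"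

definition row_set :: "real mat \<Rightarrow> real vec set" where
  "row_set A = {row A r | r. r < dim_row A}"

text \<open>pssd_exec M Nd DXl DYl E C: C k i (k \<ge> 0, agent i < M) is a possible execution
  of P-SSD with local data DXl i, DYl i and digraph sequence E (E k = edge set of G_k,
  (j,i) \<in> E k meaning j is an in-neighbour of i), for some choice of bases.\<close>
definition pssd_exec ::
  "nat \<Rightarrow> nat \<Rightarrow> (nat \<Rightarrow> real mat) \<Rightarrow> (nat \<Rightarrow> real mat) \<Rightarrow> (nat \<Rightarrow> (nat \<times> nat) set)
   \<Rightarrow> (nat \<Rightarrow> nat \<Rightarrow> real mat) \<Rightarrow> bool" where
  "pssd_exec M Nd DXl DYl E C \<longleftrightarrow>
     (\<forall>i < M. C 0 i = 1\<^sub>m Nd) \<and>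
     (\<forall>k i. 1 \<le> k \<and> i < M \<longrightarrow>
        (\<exists>Dk Ek. dim_row Dk = Nd \<and>
           col_basis Dk (\<Inter>j \<in> insert i {j. (j, i) \<in> E k}. mat_range (C (k - 1) j)) \<and>
           is_SSD (DXl i * Dk) (DYl i * Dk) Ek \<and>
           C k i = (if dim_col (Dk * Ek) < dim_col (C (k - 1) i) then Dk * Ek
                    else C (k - 1) i)))"

end

theory Submission
  imports Defs "Jordan_Normal_Form.Determinant"
begin

lemma mult_neg_vec: "dim_vec w = dim_col A \<Longrightarrow> A *\<^sub>v (- w) = - (A *\<^sub>v (w::real vec))"
  by (intro eq_vecI) (auto simp: scalar_prod_uminus_right)

lemma row_hcat: "r < dim_row A \<Longrightarrow> row (hcat A B) r = row A r @\<^sub>v row B r"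
  by (intro eq_vecI) (auto simp: hcat_def row_def)

lemma dims_hcat[simp]: "dim_row (hcat A B) = dim_row A" "dim_col (hcat A B) = dim_col A + dim_col B"
  by (auto simp: hcat_def)

lemma mult_hcat:
  assumes "dim_row B = dim_row A" "v \<in> carrier_vec (dim_col A + dim_col B)"
  shows "hcat A B *\<^sub>v v = A *\<^sub>v vec_first v (dim_col A) + B *\<^sub>v vec_last v (dim_col B)"
proof (intro eq_vecI)
  fix r assume r: "r < dim_vec (A *\<^sub>v vec_first v (dim_col A) + B *\<^sub>v vec_last v (dim_col B))"
  hence r': "r < dim_row A" using assms by simp
  have "(hcat A B *\<^sub>v v) $ r = (row A r @\<^sub>v row B r) \<bullet> (vec_first v (dim_col A) @\<^sub>v vec_last v (dim_col B))"
    using r' assms by (simp add: row_hcat)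
  also have "\<dots> = row A r \<bullet> vec_first v (dim_col A) + row B r \<bullet> vec_last v (dim_col B)"
    by (rule scalar_prod_append[of _ "dim_col A" _ "dim_col B"]) auto
  finally show "(hcat A B *\<^sub>v v) $ r = (A *\<^sub>v vec_first v (dim_col A) + B *\<^sub>v vec_last v (dim_col B)) $ r"
    using r' assms by simp
qed (use assms in auto)

lemma vec_first_app: "w \<in> carrier_vec n \<Longrightarrow> vec_first (w @\<^sub>v x) n = w"
  by (intro eq_vecI) (auto simp: vec_first_def)
lemma vec_last_app: "x \<in> carrier_vec m \<Longrightarrow> vec_last (w @\<^sub>v x) m = x"
  by (intro eq_vecI) (auto simp: vec_last_def)

lemma Z_rows: assumes "col_basis Z (null_space_pair A B)"
  shows "dim_row Z = dim_col A + dim_col B"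
proof -
  have "Z *\<^sub>v 0\<^sub>v (dim_col Z) \<in> mat_range Z" unfolding mat_range_def
    by (rule CollectI, rule exI[of _ "0\<^sub>v (dim_col Z)"], simp)
  moreover have "mat_range Z = null_space_pair A B"
    using assms unfolding col_basis_def by (rule conjunct2)
  ultimately have "Z *\<^sub>v 0\<^sub>v (dim_col Z) \<in> null_space_pair A B" by (simp only:)
  hence "Z *\<^sub>v 0\<^sub>v (dim_col Z) \<in> carrier_vec (dim_col A + dim_col B)"
    unfolding null_space_pair_def mem_Collect_eq by (rule conjunct1)
  hence "dim_vec (Z *\<^sub>v 0\<^sub>v (dim_col Z)) = dim_col A + dim_col B" by (rule carrier_vecD)
  thus ?thesis by (simp only: dim_mult_mat_vec)
qed

lemma upper_dims[simp]: "dim_row (upper_block A Z) = dim_col A" "dim_col (upper_block A Z) = dim_col Z"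
  by (auto simp: upper_block_def)

lemma upper_mult:
  assumes "dim_col A \<le> dim_row Z" "u \<in> carrier_vec (dim_col Z)"
  shows "upper_block A Z *\<^sub>v u = vec_first (Z *\<^sub>v u) (dim_col A)"
proof (intro eq_vecI)
  fix r assume "r < dim_vec (vec_first (Z *\<^sub>v u) (dim_col A))"
  hence r: "r < dim_col A" by simp
  have "row (upper_block A Z) r = row Z r"
    using r assms by (intro eq_vecI) (auto simp: upper_block_def row_def)
  have "(upper_block A Z *\<^sub>v u) $ r = row (upper_block A Z) r \<bullet> u"
    using r by (subst index_mult_mat_vec) simp_all
  also have "\<dots> = row Z r \<bullet> u" using \<open>row (upper_block A Z) r = row Z r\<close> by simp
  also have "\<dots> = (Z *\<^sub>v u) $ r" using r assms(1) by (subst index_mult_mat_vec) simp_all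
  also have "\<dots> = vec_first (Z *\<^sub>v u) (dim_col A) $ r" unfolding vec_first_def using r by simp
  finally show "(upper_block A Z *\<^sub>v u) $ r = vec_first (Z *\<^sub>v u) (dim_col A) $ r" .
qed simp


lemma null_solve:
  assumes Z: "col_basis Z (null_space_pair A B)" and d: "dim_row B = dim_row A"
    and w: "w \<in> carrier_vec (dim_col A)" and w': "w' \<in> carrier_vec (dim_col B)"
    and eq: "A *\<^sub>v w = B *\<^sub>v w'"
  shows "\<exists>u \<in> carrier_vec (dim_col Z). Z *\<^sub>v u = w @\<^sub>v (- w')"
proof -
  have c: "w @\<^sub>v (- w') \<in> carrier_vec (dim_col A + dim_col B)" using w w' by auto
  have "hcat A B *\<^sub>v (w @\<^sub>v (- w')) = A *\<^sub>v w + B *\<^sub>v (- w')"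
    using mult_hcat[OF d c] w w' by (simp add: vec_first_app vec_last_app)
  also have "\<dots> = 0\<^sub>v (dim_row A)" using eq w' d
    by (simp add: mult_neg_vec, intro eq_vecI, auto)
  finally have "w @\<^sub>v (- w') \<in> null_space_pair A B" unfolding null_space_pair_def using c by auto
  hence "w @\<^sub>v (- w') \<in> mat_range Z" using Z unfolding col_basis_def by auto
  thus ?thesis unfolding mat_range_def by auto
qed


lemma ssd_dims: "ssd_from A B C out \<Longrightarrow> dim_row out = dim_row C"
  by (induction rule: ssd_from.induct) auto

lemma Z_zero_range:
  assumes "dim_col Z = 0" "u \<in> carrier_vec (dim_col Z)"
  shows "Z *\<^sub>v u = 0\<^sub>v (dim_row Z)"
  using assms by (intro eq_vecI) (auto simp: scalar_prod_def)

lemma local_ssd: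
  assumes "ssd_from A B C out"
  shows "dim_col C = dim_col A \<Longrightarrow> dim_col B = dim_col A \<Longrightarrow> dim_row B = dim_row A \<Longrightarrow>
    W \<subseteq> carrier_vec (dim_col A) \<Longrightarrow> (\<forall>w\<in>W. \<exists>w'\<in>W. A *\<^sub>v w = B *\<^sub>v w') \<Longrightarrow>
    w \<in> W \<Longrightarrow> C *\<^sub>v w \<in> mat_range out"
  using assms
proof (induction arbitrary: W w rule: ssd_from.induct)
  case (ssd_trivial Z A B C)
  obtain w' where w': "w' \<in> W" "A *\<^sub>v w = B *\<^sub>v w'" using ssd_trivial by blast
  have wc: "w \<in> carrier_vec (dim_col A)" "w' \<in> carrier_vec (dim_col B)" using ssd_trivial w' by auto
  obtain u where u: "u \<in> carrier_vec (dim_col Z)" "Z *\<^sub>v u = w @\<^sub>v (- w')"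
    using null_solve[OF ssd_trivial(1) ssd_trivial(5) wc w'(2)] by blast
  have "Z *\<^sub>v u = 0\<^sub>v (dim_row Z)" using Z_zero_range[OF ssd_trivial(2) u(1)] .
  hence "vec_first (w @\<^sub>v (- w')) (dim_col A) = 0\<^sub>v (dim_col A)"
    using u(2) Z_rows[OF ssd_trivial(1)] by (intro eq_vecI) (auto simp: vec_first_def)
  hence w0: "w = 0\<^sub>v (dim_col A)" using wc by (simp add: vec_first_app)
  have "C *\<^sub>v w = 0\<^sub>m (dim_row C) 0 *\<^sub>v 0\<^sub>v 0"
    using w0 ssd_trivial by (intro eq_vecI) (auto simp: scalar_prod_def)
  thus ?case unfolding mat_range_def by auto
next
  case (ssd_stop Z A B C)
  thus ?case unfolding mat_range_def by auto
next
  case (ssd_step Z A B C out)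
  let ?U = "upper_block A Z"
  have zr: "dim_row Z = dim_col A + dim_col B" using Z_rows[OF ssd_step(1)] .
  define W' where "W' = {u \<in> carrier_vec (dim_col Z). ?U *\<^sub>v u \<in> W}"
  have pre: "\<exists>u\<in>W'. ?U *\<^sub>v u = v" if v: "v \<in> W" for v
  proof -
    obtain v' where v': "v' \<in> W" "A *\<^sub>v v = B *\<^sub>v v'" using ssd_step v by blast
    have vc: "v \<in> carrier_vec (dim_col A)" "v' \<in> carrier_vec (dim_col B)" using ssd_step v v' by auto
    obtain u where u: "u \<in> carrier_vec (dim_col Z)" "Z *\<^sub>v u = v @\<^sub>v (- v')"
      using null_solve[OF ssd_step(1) ssd_step(8) vc v'(2)] by blast
    have "?U *\<^sub>v u = v" using upper_mult[of A Z u] u zr vc by (simp add: vec_first_app)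
    thus ?thesis using u v unfolding W'_def by auto
  qed
  have inv: "\<forall>u\<in>W'. \<exists>u'\<in>W'. (A * ?U) *\<^sub>v u = (B * ?U) *\<^sub>v u'"
  proof
    fix u assume u: "u \<in> W'"
    hence uc: "u \<in> carrier_vec (dim_col Z)" and uw: "?U *\<^sub>v u \<in> W" unfolding W'_def by auto
    obtain v' where v': "v' \<in> W" "A *\<^sub>v (?U *\<^sub>v u) = B *\<^sub>v v'" using ssd_step uw by blast
    obtain u' where u': "u' \<in> W'" "?U *\<^sub>v u' = v'" using pre[OF v'(1)] by blast
    have u'c: "u' \<in> carrier_vec (dim_col Z)" using u' unfolding W'_def by auto
    have "(A * ?U) *\<^sub>v u = A *\<^sub>v (?U *\<^sub>v u)"
      using uc by (intro assoc_mult_mat_vec[of _ "dim_row A" "dim_col A" _ "dim_col Z"]) auto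
    also have "\<dots> = B *\<^sub>v (?U *\<^sub>v u')" using v' u' by simp
    also have "\<dots> = (B * ?U) *\<^sub>v u'"
      using u'c ssd_step by (intro assoc_mult_mat_vec[symmetric, of _ "dim_row B" "dim_col A" _ "dim_col Z"]) auto
    finally show "\<exists>u'\<in>W'. (A * ?U) *\<^sub>v u = (B * ?U) *\<^sub>v u'" using u' by blast
  qed
  obtain u where u: "u \<in> W'" "?U *\<^sub>v u = w" using pre[OF ssd_step(11)] by blast
  have uc: "u \<in> carrier_vec (dim_col Z)" using u unfolding W'_def by auto
  have "(C * ?U) *\<^sub>v u \<in> mat_range out"
  proof (rule ssd_step.IH)
    show "W' \<subseteq> carrier_vec (dim_col (A * ?U))" unfolding W'_def by auto
  qed (use ssd_step inv u in auto)
  moreover have "(C * ?U) *\<^sub>v u = C *\<^sub>v w"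
    using uc u ssd_step by (subst assoc_mult_mat_vec[of _ "dim_row C" "dim_col A" _ "dim_col Z"]) auto
  ultimately show ?case by simp
qed


lemma unit_right_inv:
  assumes V: "V \<in> carrier_mat p p" and d: "det V \<noteq> (0::real)"
  shows "\<exists>W \<in> carrier_mat p p. V * W = 1\<^sub>m p"
proof -
  have "V \<in> Units (ring_mat TYPE(real) p ())" by (rule det_non_zero_imp_unit[OF V d])
  thus ?thesis unfolding Units_def ring_mat_def by auto
qed

lemma inj_surj:
  fixes U :: "real mat"
  assumes U: "U \<in> carrier_mat q p" and qp: "q \<le> p"
    and inj: "\<forall>u\<in>carrier_vec p. U *\<^sub>v u = 0\<^sub>v q \<longrightarrow> u = 0\<^sub>v p"
    and x: "x \<in> carrier_vec q"
  shows "\<exists>u\<in>carrier_vec p. U *\<^sub>v u = x"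
proof -
  have dU: "dim_row U = q" "dim_col U = p" using U by auto
  have pq: "p = q"
  proof (rule ccontr)
    assume "p \<noteq> q" hence lt: "q < p" using qp by simp
    define V where "V = mat p p (\<lambda>(r,c). if r < q then U $$ (r,c) else 0)"
    have Vc: "V \<in> carrier_mat p p" unfolding V_def by (rule mat_carrier)
    have dV: "dim_row V = p" "dim_col V = p" using Vc by auto
    have rowV: "row V r = (if r < q then row U r else 0\<^sub>v p)" if r: "r < p" for r
    proof (intro eq_vecI)
      fix c assume "c < dim_vec (if r < q then row U r else 0\<^sub>v p)"
      hence c: "c < p" using dU by (cases "r < q") auto
      have "row V r $ c = V $$ (r, c)" using r c dV by simp
      also have "\<dots> = (if r < q then U $$ (r,c) else 0)" unfolding V_def using r c by simp
      also have "\<dots> = (if r < q then row U r else 0\<^sub>v p) $ c" using c dU by simp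
      finally show "row V r $ c = (if r < q then row U r else 0\<^sub>v p) $ c" .
    qed (use dV dU in simp)
    have "det V = 0"
    proof (rule ccontr)
      assume "det V \<noteq> 0"
      then obtain W where W: "W \<in> carrier_mat p p" "V * W = 1\<^sub>m p" using unit_right_inv[OF Vc] by blast
      have p1: "p - 1 < p" "\<not> p - 1 < q" using lt by auto
      have e1: "(V * W) $$ (p - 1, p - 1) = 1" unfolding W(2) using p1 by simp
      have "(V * W) $$ (p - 1, p - 1) = row V (p - 1) \<bullet> col W (p - 1)"
        by (rule index_mult_mat) (use W dV p1 in auto)
      also have "row V (p - 1) = 0\<^sub>v p" using rowV[OF p1(1)] unfolding if_not_P[OF p1(2)] .
      also have "0\<^sub>v p \<bullet> col W (p - 1) = 0" using col_carrier_vec[OF p1(1) W(1)] by (rule scalar_prod_left_zero)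
      finally show False using e1 by simp
    qed
    then obtain v where v: "v \<in> carrier_vec p" "v \<noteq> 0\<^sub>v p" "V *\<^sub>v v = 0\<^sub>v p"
      using det_0_iff_vec_prod_zero[OF Vc] by blast
    have "U *\<^sub>v v = 0\<^sub>v q"
    proof (intro eq_vecI)
      fix r assume "r < dim_vec (0\<^sub>v q)" hence r: "r < q" by simp
      have "(U *\<^sub>v v) $ r = row U r \<bullet> v" using r dU by simp
      also have "\<dots> = row V r \<bullet> v" using rowV[of r] r lt by simp
      also have "\<dots> = (V *\<^sub>v v) $ r" using r lt dV by simp
      also have "\<dots> = 0" using v(3) r lt by simp
      finally show "(U *\<^sub>v v) $ r = 0\<^sub>v q $ r" using r by simp
    qed (use dU in simp)
    thus False using inj v by blast
  qed
  have Uc: "U \<in> carrier_mat q q" using U pq by simp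
  have "det U \<noteq> 0"
  proof
    assume "det U = 0"
    then obtain v where v: "v \<in> carrier_vec q" "v \<noteq> 0\<^sub>v q" "U *\<^sub>v v = 0\<^sub>v q"
      using det_0_iff_vec_prod_zero[OF Uc] by blast
    thus False using inj pq by blast
  qed
  then obtain W where W: "W \<in> carrier_mat q q" "U * W = 1\<^sub>m q" using unit_right_inv[OF Uc] by blast
  have "U *\<^sub>v (W *\<^sub>v x) = (U * W) *\<^sub>v x" by (rule assoc_mult_mat_vec[OF Uc W(1) x, symmetric])
  also have "\<dots> = x" unfolding W(2) using x by (rule one_mult_mat_vec)
  finally have "U *\<^sub>v (W *\<^sub>v x) = x" .
  moreover have "W *\<^sub>v x \<in> carrier_vec p" unfolding pq by (rule mult_mat_vec_carrier[OF W(1) x])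
  ultimately show ?thesis by (rule bexI)
qed

lemma mzr_vec: "A *\<^sub>v 0\<^sub>v (dim_col A) = (0\<^sub>v (dim_row A) :: real vec)"
  by (intro eq_vecI) (auto simp: row_def)

lemma range_null:
  assumes Z: "col_basis Z (null_space_pair A B)" and u: "u \<in> carrier_vec (dim_col Z)"
  shows "Z *\<^sub>v u \<in> carrier_vec (dim_col A + dim_col B)"
    "hcat A B *\<^sub>v (Z *\<^sub>v u) = 0\<^sub>v (dim_row A)"
proof -
  have "Z *\<^sub>v u \<in> mat_range Z" unfolding mat_range_def
    by (rule CollectI, rule exI[of _ u], simp add: u)
  moreover have "mat_range Z = null_space_pair A B"
    using Z unfolding col_basis_def by (rule conjunct2)
  ultimately have "Z *\<^sub>v u \<in> null_space_pair A B" by (simp only:)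
  thus "Z *\<^sub>v u \<in> carrier_vec (dim_col A + dim_col B)"
    "hcat A B *\<^sub>v (Z *\<^sub>v u) = 0\<^sub>v (dim_row A)"
    unfolding null_space_pair_def mem_Collect_eq by (rule conjunct1, rule conjunct2)
qed

lemma fcr_apply: "full_column_rank Z \<Longrightarrow> u \<in> carrier_vec (dim_col Z) \<Longrightarrow>
  Z *\<^sub>v u = 0\<^sub>v (dim_row Z) \<Longrightarrow> u = 0\<^sub>v (dim_col Z)"
  unfolding full_column_rank_def by blast

lemma hcat_split:
  assumes Z: "col_basis Z (null_space_pair A B)" and d: "dim_row B = dim_row A"
    and u: "u \<in> carrier_vec (dim_col Z)"
  shows "A *\<^sub>v (upper_block A Z *\<^sub>v u) + B *\<^sub>v vec_last (Z *\<^sub>v u) (dim_col B) = 0\<^sub>v (dim_row A)"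
proof -
  have zr: "dim_row Z = dim_col A + dim_col B" using Z_rows[OF Z] .
  have um: "upper_block A Z *\<^sub>v u = vec_first (Z *\<^sub>v u) (dim_col A)"
    by (rule upper_mult) (use zr u in auto)
  have "hcat A B *\<^sub>v (Z *\<^sub>v u) = 0\<^sub>v (dim_row A)" by (rule range_null[OF Z u])
  thus ?thesis unfolding um mult_hcat[OF d range_null(1)[OF Z u]] .
qed

lemma U_inj:
  assumes Z: "col_basis Z (null_space_pair A B)" and d: "dim_row B = dim_row A"
    and fB: "full_column_rank B"
    and u: "u \<in> carrier_vec (dim_col Z)" and U0: "upper_block A Z *\<^sub>v u = 0\<^sub>v (dim_col A)"
  shows "u = 0\<^sub>v (dim_col Z)"
proof -
  have zr: "dim_row Z = dim_col A + dim_col B" using Z_rows[OF Z] .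
  let ?v = "Z *\<^sub>v u"
  have vc: "?v \<in> carrier_vec (dim_col A + dim_col B)" by (rule range_null[OF Z u])
  have vf: "vec_first ?v (dim_col A) = 0\<^sub>v (dim_col A)"
    using upper_mult[of A Z u] zr u U0 by simp
  have "A *\<^sub>v 0\<^sub>v (dim_col A) + B *\<^sub>v vec_last ?v (dim_col B) = 0\<^sub>v (dim_row A)"
    using hcat_split[OF Z d u] unfolding U0 .
  hence "0\<^sub>v (dim_row A) + B *\<^sub>v vec_last ?v (dim_col B) = 0\<^sub>v (dim_row A)" unfolding mzr_vec .
  moreover have "B *\<^sub>v vec_last ?v (dim_col B) \<in> carrier_vec (dim_row A)"
    using d by (intro carrier_vecI) simp
  ultimately have "B *\<^sub>v vec_last ?v (dim_col B) = 0\<^sub>v (dim_row B)" using d by simp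
  hence vl: "vec_last ?v (dim_col B) = 0\<^sub>v (dim_col B)" by (rule fcr_apply[OF fB vec_last_carrier])
  have "?v = vec_first ?v (dim_col A) @\<^sub>v vec_last ?v (dim_col B)" using vc by simp
  also have "\<dots> = 0\<^sub>v (dim_row Z)" unfolding vf vl zr by (intro eq_vecI) auto
  finally have "Z *\<^sub>v u = 0\<^sub>v (dim_row Z)" .
  moreover have "full_column_rank Z" using Z unfolding col_basis_def by (rule conjunct1)
  ultimately show ?thesis using fcr_apply u by blast
qed

lemma fcr_mult:
  assumes fA: "full_column_rank A" and fU: "full_column_rank U" and d: "dim_row U = dim_col A"
  shows "full_column_rank (A * U)"
  unfolding full_column_rank_def
proof (intro ballI impI)
  fix x assume x: "x \<in> carrier_vec (dim_col (A * U))" and h: "A * U *\<^sub>v x = 0\<^sub>v (dim_row (A * U))"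
  have Ac: "A \<in> carrier_mat (dim_row A) (dim_col A)" by simp
  have Uc: "U \<in> carrier_mat (dim_col A) (dim_col U)" using d by (intro carrier_matI) simp_all
  have xc: "x \<in> carrier_vec (dim_col U)" using x by simp
  have "A *\<^sub>v (U *\<^sub>v x) = 0\<^sub>v (dim_row A)"
    using h unfolding assoc_mult_mat_vec[OF Ac Uc xc] by simp
  moreover have "U *\<^sub>v x \<in> carrier_vec (dim_col A)" using d by (intro carrier_vecI) simp
  ultimately have "U *\<^sub>v x = 0\<^sub>v (dim_col A)" using fcr_apply[OF fA] by blast
  hence "U *\<^sub>v x = 0\<^sub>v (dim_row U)" using d by simp
  hence "x = 0\<^sub>v (dim_col U)" by (rule fcr_apply[OF fU xc])
  thus "x = 0\<^sub>v (dim_col (A * U))" by simp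
qed

lemma add_eq_zero_neg:
  assumes "(a::real vec) + b = 0\<^sub>v n" "dim_vec a = n" "dim_vec b = n"
  shows "a = - b"
proof (intro eq_vecI)
  fix i assume "i < dim_vec (- b)"
  hence i: "i < n" using assms by simp
  have "(a + b) $ i = 0" using assms(1) i by simp
  hence "a $ i + b $ i = 0" using i assms(3) by simp
  thus "a $ i = (- b) $ i" using i assms(3) by simp
qed (use assms in simp)

lemma global_ssd:
  assumes "ssd_from A B C out"
  shows "A = A0 * C \<Longrightarrow> B = B0 * C \<Longrightarrow> A0 \<in> carrier_mat n N \<Longrightarrow> B0 \<in> carrier_mat n N \<Longrightarrow>
    C \<in> carrier_mat N (dim_col C) \<Longrightarrow> full_column_rank A \<Longrightarrow> full_column_rank B \<Longrightarrow>
    x \<in> carrier_vec (dim_col out) \<Longrightarrow>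
    \<exists>y\<in>carrier_vec (dim_col out). A0 *\<^sub>v (out *\<^sub>v x) = B0 *\<^sub>v (out *\<^sub>v y)"
  using assms
proof (induction arbitrary: x rule: ssd_from.induct)
  case (ssd_trivial Z A B C)
  have N: "dim_row C = N" "dim_col A0 = N" "dim_row A0 = n" "dim_col B0 = N" "dim_row B0 = n"
    using ssd_trivial.prems(3,4,5) by auto
  have z: "0\<^sub>m (dim_row C) 0 *\<^sub>v x = 0\<^sub>v N" using N ssd_trivial.prems(8) by (intro eq_vecI) (auto simp: scalar_prod_def)
  have "A0 *\<^sub>v (0\<^sub>m (dim_row C) 0 *\<^sub>v x) = B0 *\<^sub>v (0\<^sub>m (dim_row C) 0 *\<^sub>v x)"
    unfolding z using mzr_vec[of A0] mzr_vec[of B0] N by simp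
  thus ?case using ssd_trivial.prems(8) by (rule bexI)
next
  case (ssd_stop Z A B C)
  let ?U = "upper_block A Z"
  have dA: "dim_col A = dim_col C" "dim_row A = n" using ssd_stop.prems(1,3) by auto
  have dB: "dim_col B = dim_col C" "dim_row B = n" using ssd_stop.prems(2,4) by auto
  have d: "dim_row B = dim_row A" using dA dB by simp
  have Z: "col_basis Z (null_space_pair A B)" by (rule ssd_stop(1))
  have inj: "\<forall>u\<in>carrier_vec (dim_col Z). ?U *\<^sub>v u = 0\<^sub>v (dim_col A) \<longrightarrow> u = 0\<^sub>v (dim_col Z)"
    using U_inj[OF Z d ssd_stop.prems(7)] by blast
  have xc: "x \<in> carrier_vec (dim_col A)" using ssd_stop.prems(8) dA by simp
  have Ucar: "?U \<in> carrier_mat (dim_col A) (dim_col Z)" by (intro carrier_matI) simp_all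
  obtain u where u: "u \<in> carrier_vec (dim_col Z)" "?U *\<^sub>v u = x"
    using inj_surj[OF Ucar ssd_stop(3) inj xc] by blast
  define y where "y = - vec_last (Z *\<^sub>v u) (dim_col B)"
  have yc: "y \<in> carrier_vec (dim_col C)" unfolding y_def using dB by simp
  have "A *\<^sub>v x + B *\<^sub>v vec_last (Z *\<^sub>v u) (dim_col B) = 0\<^sub>v (dim_row A)"
    using hcat_split[OF Z d u(1)] unfolding u(2) .
  hence "A *\<^sub>v x = - (B *\<^sub>v vec_last (Z *\<^sub>v u) (dim_col B))"
    by (rule add_eq_zero_neg) (use d in simp_all)
  also have "\<dots> = B *\<^sub>v y" unfolding y_def by (rule mult_neg_vec[symmetric]) simp
  finally have eq: "A *\<^sub>v x = B *\<^sub>v y" .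
  have Cc: "C \<in> carrier_mat N (dim_col C)" by (rule ssd_stop.prems(5))
  have xc': "x \<in> carrier_vec (dim_col C)" using xc dA by simp
  have yc': "y \<in> carrier_vec (dim_col C)" by (rule yc)
  have "A0 *\<^sub>v (C *\<^sub>v x) = A *\<^sub>v x"
    unfolding ssd_stop.prems(1) by (rule assoc_mult_mat_vec[OF ssd_stop.prems(3) Cc xc', symmetric])
  also have "\<dots> = B *\<^sub>v y" by (rule eq)
  also have "\<dots> = B0 *\<^sub>v (C *\<^sub>v y)"
    unfolding ssd_stop.prems(2) by (rule assoc_mult_mat_vec[OF ssd_stop.prems(4) Cc yc'])
  finally have "A0 *\<^sub>v (C *\<^sub>v x) = B0 *\<^sub>v (C *\<^sub>v y)" .
  thus ?case using yc by blast
next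
  case (ssd_step Z A B C out)
  let ?U = "upper_block A Z"
  have dA: "dim_col A = dim_col C" "dim_row A = n" using ssd_step.prems(1,3) by auto
  have dB: "dim_col B = dim_col C" "dim_row B = n" using ssd_step.prems(2,4) by auto
  have d: "dim_row B = dim_row A" using dA dB by simp
  have fU: "full_column_rank ?U"
    unfolding full_column_rank_def using U_inj[OF ssd_step(1) d ssd_step.prems(7)] by simp
  have Uc: "?U \<in> carrier_mat (dim_col C) (dim_col Z)" using dA by (intro carrier_matI) simp_all
  have Cc: "C \<in> carrier_mat N (dim_col C)" by (rule ssd_step.prems(5))
  show ?case
  proof (rule ssd_step.IH)
    have F: "(A0 * C) * ?U = A0 * (C * ?U)" by (rule assoc_mult_mat[OF ssd_step.prems(3) Cc Uc])
    show "A * ?U = A0 * (C * ?U)" using F unfolding ssd_step.prems(1)[symmetric] .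
    have F: "(B0 * C) * ?U = B0 * (C * ?U)" by (rule assoc_mult_mat[OF ssd_step.prems(4) Cc Uc])
    show "B * ?U = B0 * (C * ?U)" using F unfolding ssd_step.prems(2)[symmetric] .
    show "full_column_rank (A * ?U)" by (rule fcr_mult[OF ssd_step.prems(6) fU]) (use dA in simp)
    show "full_column_rank (B * ?U)" by (rule fcr_mult[OF ssd_step.prems(7) fU]) (use dB dA in simp)
    show "A0 \<in> carrier_mat n N" by (rule ssd_step.prems(3))
    show "B0 \<in> carrier_mat n N" by (rule ssd_step.prems(4))
    show "C * ?U \<in> carrier_mat N (dim_col (C * ?U))" using Cc by (intro carrier_matI) simp_all
    show "x \<in> carrier_vec (dim_col out)" by (rule ssd_step.prems(8))
  qed
qed

theorem proposition4p8:
  fixes M Nd :: nat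
    and DX DY DXs DYs :: "real mat"
    and DXl DYl :: "nat \<Rightarrow> real mat"
    and E :: "nat \<Rightarrow> (nat \<times> nat) set"
    and C :: "nat \<Rightarrow> nat \<Rightarrow> real mat"
    and C_SSD :: "real mat"
  assumes DX_dim: "DX \<in> carrier_mat (dim_row DX) Nd" and DY_dim: "DY \<in> carrier_mat (dim_row DX) Nd"
    and full_rank: "full_column_rank DX" "full_column_rank DY"
    and local_dim: "\<And>i. i < M \<Longrightarrow> DXl i \<in> carrier_mat (dim_row (DXl i)) Nd \<and>
                                     DYl i \<in> carrier_mat (dim_row (DXl i)) Nd"
    and cover: "(\<Union>i \<in> {..<M}. row_set (hcat (DXl i) (DYl i))) = row_set (hcat DX DY)"
    and sig_dim: "DXs \<in> carrier_mat (dim_row DXs) Nd" "DYs \<in> carrier_mat (dim_row DXs) Nd"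
    and sig_rank: "full_column_rank DXs" "full_column_rank DYs"
    and sig_rows: "\<And>i. i < M \<Longrightarrow> row_set (hcat DXs DYs) \<subseteq> row_set (hcat (DXl i) (DYl i))"
    and graphs: "\<And>k. E k \<subseteq> {..<M} \<times> {..<M}"
    and ssd: "is_SSD DX DY C_SSD"
    and exec: "pssd_exec M Nd DXl DYl E C"
  shows "\<forall>k i. i < M \<longrightarrow> mat_range C_SSD \<subseteq> mat_range (C k i)"
  proof -
  let ?S = "mat_range C_SSD"
  have dX: "dim_col DX = Nd" "dim_col DY = Nd" "dim_row DY = dim_row DX"
    using carrier_matD[OF DX_dim] carrier_matD[OF DY_dim] by simp_all
  have ssd': "ssd_from DX DY (1\<^sub>m Nd) C_SSD" using ssd dX unfolding is_SSD_def by simp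
  have dC: "dim_row C_SSD = Nd" using ssd_dims[OF ssd'] by simp
  have Sc: "?S \<subseteq> carrier_vec Nd"
  proof
    fix s assume "s \<in> ?S"
    then obtain x where "s = C_SSD *\<^sub>v x" unfolding mat_range_def by blast
    thus "s \<in> carrier_vec Nd" using dC by (intro carrier_vecI) simp
  qed
  have Sinv: "\<forall>s\<in>?S. \<exists>s'\<in>?S. DX *\<^sub>v s = DY *\<^sub>v s'"
  proof
    fix s assume "s \<in> ?S"
    then obtain x where x: "x \<in> carrier_vec (dim_col C_SSD)" "s = C_SSD *\<^sub>v x"
      unfolding mat_range_def by blast
    have e1: "DX = DX * 1\<^sub>m Nd" by (rule right_mult_one_mat[OF DX_dim, symmetric])
    have e2: "DY = DY * 1\<^sub>m Nd" by (rule right_mult_one_mat[OF DY_dim, symmetric])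
    have oc: "1\<^sub>m Nd \<in> carrier_mat Nd (dim_col (1\<^sub>m Nd :: real mat))" by simp
    obtain y where y: "y \<in> carrier_vec (dim_col C_SSD)" "DX *\<^sub>v (C_SSD *\<^sub>v x) = DY *\<^sub>v (C_SSD *\<^sub>v y)"
      using global_ssd[OF ssd' e1 e2 DX_dim DY_dim oc full_rank x(1)] by blast
    have "C_SSD *\<^sub>v y \<in> ?S" unfolding mat_range_def
      by (rule CollectI, rule exI[of _ y], simp add: y(1))
    moreover have "DX *\<^sub>v s = DY *\<^sub>v (C_SSD *\<^sub>v y)" unfolding x(2) by (rule y(2))
    ultimately show "\<exists>s'\<in>?S. DX *\<^sub>v s = DY *\<^sub>v s'" by blast
  qed
  have rowloc: "DXl i *\<^sub>v s = DYl i *\<^sub>v s'"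
    if i: "i < M" and s: "s \<in> carrier_vec Nd" and s': "s' \<in> carrier_vec Nd"
      and eq: "DX *\<^sub>v s = DY *\<^sub>v s'" for i s s'
  proof -
    have li: "dim_col (DXl i) = Nd" "dim_col (DYl i) = Nd" "dim_row (DYl i) = dim_row (DXl i)"
      using carrier_matD[OF conjunct1[OF local_dim[OF i]]] carrier_matD[OF conjunct2[OF local_dim[OF i]]]
      by simp_all
    show ?thesis
    proof (intro eq_vecI)
      fix r assume "r < dim_vec (DYl i *\<^sub>v s')"
      hence r: "r < dim_row (DXl i)" using li by simp
      have "row (hcat (DXl i) (DYl i)) r \<in> row_set (hcat DX DY)"
        using cover i r unfolding row_set_def by auto
      then obtain r' where r': "r' < dim_row DX" "row (hcat (DXl i) (DYl i)) r = row (hcat DX DY) r'"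
        unfolding row_set_def by auto
      hence "row (DXl i) r @\<^sub>v row (DYl i) r = row DX r' @\<^sub>v row DY r'"
        using r by (simp add: row_hcat)
      moreover have "row (DXl i) r \<in> carrier_vec Nd" using li by (intro carrier_vecI) simp
      moreover have "row DX r' \<in> carrier_vec Nd" using dX by (intro carrier_vecI) simp
      ultimately have rr: "row (DXl i) r = row DX r'" "row (DYl i) r = row DY r'"
        using append_vec_eq by blast+
      have "(DXl i *\<^sub>v s) $ r = row DX r' \<bullet> s" using r rr by simp
      also have "\<dots> = (DX *\<^sub>v s) $ r'" using r' by simp
      also have "\<dots> = (DY *\<^sub>v s') $ r'" using eq by simp
      also have "\<dots> = row DY r' \<bullet> s'" using r' dX by simp
      also have "\<dots> = (DYl i *\<^sub>v s') $ r" using r rr li by simp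
      finally show "(DXl i *\<^sub>v s) $ r = (DYl i *\<^sub>v s') $ r" .
    qed (use li in simp)
  qed
  have Sloc: "\<forall>s\<in>?S. \<exists>s'\<in>?S. DXl i *\<^sub>v s = DYl i *\<^sub>v s'" if i: "i < M" for i
    using Sinv rowloc[OF i] Sc by blast
  have ex0: "\<And>i. i < M \<Longrightarrow> C 0 i = 1\<^sub>m Nd" using exec unfolding pssd_exec_def by blast
  have exS: "\<And>k i. i < M \<Longrightarrow> \<exists>Dk Ek. dim_row Dk = Nd \<and>
           col_basis Dk (\<Inter>j \<in> insert i {j. (j, i) \<in> E (Suc k)}. mat_range (C k j)) \<and>
           is_SSD (DXl i * Dk) (DYl i * Dk) Ek \<and>
           C (Suc k) i = (if dim_col (Dk * Ek) < dim_col (C k i) then Dk * Ek else C k i)"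
  proof -
    fix k i assume i: "i < M"
    have "1 \<le> Suc k \<and> i < M" using i by simp
    hence "\<exists>Dk Ek. dim_row Dk = Nd \<and>
           col_basis Dk (\<Inter>j \<in> insert i {j. (j, i) \<in> E (Suc k)}. mat_range (C (Suc k - 1) j)) \<and>
           is_SSD (DXl i * Dk) (DYl i * Dk) Ek \<and>
           C (Suc k) i = (if dim_col (Dk * Ek) < dim_col (C (Suc k - 1) i) then Dk * Ek else C (Suc k - 1) i)"
      using exec unfolding pssd_exec_def by blast
    thus "\<exists>Dk Ek. dim_row Dk = Nd \<and>
           col_basis Dk (\<Inter>j \<in> insert i {j. (j, i) \<in> E (Suc k)}. mat_range (C k j)) \<and>
           is_SSD (DXl i * Dk) (DYl i * Dk) Ek \<and>
           C (Suc k) i = (if dim_col (Dk * Ek) < dim_col (C k i) then Dk * Ek else C k i)"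
      unfolding diff_Suc_1 .
  qed
  have main: "\<forall>i<M. ?S \<subseteq> mat_range (C k i)" for k
  proof (induction k)
    case 0
    show ?case
    proof (intro allI impI subsetI)
      fix i s assume i: "i < M" and s: "s \<in> ?S"
      have sc: "s \<in> carrier_vec Nd" using Sc s by blast
      have "1\<^sub>m Nd *\<^sub>v s \<in> mat_range (1\<^sub>m Nd)" unfolding mat_range_def
        by (rule CollectI, rule exI[of _ s], simp add: sc)
      thus "s \<in> mat_range (C 0 i)" unfolding ex0[OF i] one_mult_mat_vec[OF sc] .
    qed
  next
    case (Suc k)
    show ?case
    proof (intro allI impI)
      fix i assume i: "i < M"
      obtain Dk Ek where D: "dim_row Dk = Nd"
        "col_basis Dk (\<Inter>j \<in> insert i {j. (j, i) \<in> E (Suc k)}. mat_range (C k j))"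
        "is_SSD (DXl i * Dk) (DYl i * Dk) Ek"
        "C (Suc k) i = (if dim_col (Dk * Ek) < dim_col (C k i) then Dk * Ek else C k i)"
        using exS[OF i, of k] by blast
      have "?S \<subseteq> (\<Inter>j \<in> insert i {j. (j, i) \<in> E (Suc k)}. mat_range (C k j))"
      proof
        fix s assume s: "s \<in> ?S"
        show "s \<in> (\<Inter>j \<in> insert i {j. (j, i) \<in> E (Suc k)}. mat_range (C k j))"
        proof
          fix j assume "j \<in> insert i {j. (j, i) \<in> E (Suc k)}"
          hence "j < M" using i graphs[of "Suc k"] by blast
          thus "s \<in> mat_range (C k j)" using Suc s by blast
        qed
      qed
      moreover have "mat_range Dk = (\<Inter>j \<in> insert i {j. (j, i) \<in> E (Suc k)}. mat_range (C k j))"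
        using D(2) unfolding col_basis_def by (rule conjunct2)
      ultimately have SD: "?S \<subseteq> mat_range Dk" by (simp only:)
      have li: "DXl i \<in> carrier_mat (dim_row (DXl i)) Nd" "DYl i \<in> carrier_mat (dim_row (DXl i)) Nd"
        using local_dim[OF i] by (rule conjunct1, rule conjunct2)
      have lid: "dim_col (DXl i) = Nd" "dim_col (DYl i) = Nd" "dim_row (DYl i) = dim_row (DXl i)"
        using carrier_matD[OF li(1)] carrier_matD[OF li(2)] by simp_all
      have Dc: "Dk \<in> carrier_mat Nd (dim_col Dk)" using D(1) by (intro carrier_matI) simp_all
      let ?A = "DXl i * Dk" and ?B = "DYl i * Dk"
      have ssdl: "ssd_from ?A ?B (1\<^sub>m (dim_col Dk)) Ek" using D(3) unfolding is_SSD_def by simp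
      have dE: "dim_row Ek = dim_col Dk" using ssd_dims[OF ssdl] by simp
      have Ec: "Ek \<in> carrier_mat (dim_col Dk) (dim_col Ek)" using dE by (intro carrier_matI) simp_all
      define W where "W = {u \<in> carrier_vec (dim_col Dk). Dk *\<^sub>v u \<in> ?S}"
      have Winv: "\<forall>w\<in>W. \<exists>w'\<in>W. ?A *\<^sub>v w = ?B *\<^sub>v w'"
      proof
        fix w assume w: "w \<in> W"
        hence wc: "w \<in> carrier_vec (dim_col Dk)" and ws: "Dk *\<^sub>v w \<in> ?S" unfolding W_def by blast+
        obtain s' where s': "s' \<in> ?S" "DXl i *\<^sub>v (Dk *\<^sub>v w) = DYl i *\<^sub>v s'" using Sloc[OF i] ws by blast
        have "s' \<in> mat_range Dk" using SD s'(1) by blast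
        then obtain w' where w': "w' \<in> carrier_vec (dim_col Dk)" "s' = Dk *\<^sub>v w'"
          unfolding mat_range_def by blast
        have "?A *\<^sub>v w = DXl i *\<^sub>v (Dk *\<^sub>v w)" by (rule assoc_mult_mat_vec[OF li(1) Dc wc])
        also have "\<dots> = DYl i *\<^sub>v (Dk *\<^sub>v w')" using s'(2) unfolding w'(2) .
        also have "\<dots> = ?B *\<^sub>v w'" by (rule assoc_mult_mat_vec[OF li(2) Dc w'(1), symmetric])
        finally have "?A *\<^sub>v w = ?B *\<^sub>v w'" .
        moreover have "w' \<in> W" unfolding W_def using w' s'(1) by blast
        ultimately show "\<exists>w'\<in>W. ?A *\<^sub>v w = ?B *\<^sub>v w'" by blast
      qed
      have SDE: "?S \<subseteq> mat_range (Dk * Ek)"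
      proof
        fix s assume s: "s \<in> ?S"
        hence "s \<in> mat_range Dk" using SD by blast
        then obtain u where u: "u \<in> carrier_vec (dim_col Dk)" "s = Dk *\<^sub>v u"
          unfolding mat_range_def by blast
        have uW: "u \<in> W" using u s unfolding W_def by blast
        have "1\<^sub>m (dim_col Dk) *\<^sub>v u \<in> mat_range Ek"
        proof (rule local_ssd[OF ssdl _ _ _ _ Winv uW])
          show "dim_col (1\<^sub>m (dim_col Dk)) = dim_col ?A" by simp
          show "dim_col ?B = dim_col ?A" by simp
          show "dim_row ?B = dim_row ?A" using lid by simp
          show "W \<subseteq> carrier_vec (dim_col ?A)" unfolding W_def by auto
        qed
        hence "u \<in> mat_range Ek" unfolding one_mult_mat_vec[OF u(1)] .
        then obtain x where x: "x \<in> carrier_vec (dim_col Ek)" "u = Ek *\<^sub>v x"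
          unfolding mat_range_def by blast
        have "s = (Dk * Ek) *\<^sub>v x" unfolding u(2) x(2) by (rule assoc_mult_mat_vec[OF Dc Ec x(1), symmetric])
        moreover have "x \<in> carrier_vec (dim_col (Dk * Ek))" using x(1) by simp
        ultimately show "s \<in> mat_range (Dk * Ek)" unfolding mat_range_def by blast
      qed
      have SC: "?S \<subseteq> mat_range (C k i)" using Suc i by blast
      show "?S \<subseteq> mat_range (C (Suc k) i)"
        unfolding D(4) using SDE SC by (cases "dim_col (Dk * Ek) < dim_col (C k i)") simp_all
    qed
  qed
  thus ?thesis by blast
qed

end
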